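(* Let $\mathcal{G}$ be a simple temporal clique and $G^-=(V,E^-)$ its minimum-edge digraph. For every directed path $(u_0,u_1,\dots,u_k)$ with $k\ge 1$ in $G^-$, the vertex sequence $u_0,u_1,\dots,u_k$ is a journey in $\mathcal{G}$.
   Context: A simple temporal clique is a pair $\mathcal{G}=(G,\lambda)$ where $G=(V,E)$ is the complete graph on a finite vertex set $V$ and $\lambda:E\to\mathbb{N}$ assigns to each edge a single integer label such that any two distinct edges sharing an endpoint have different labels. A journey from $x$ to $y$ is a sequence of vertices $x=u_0,\dots,u_k=y$ ($k\ge1$) with $\lambda(\{u_{i-1},u_i\})<\lambda(\{u_i,u_{i+1}\})$ for all $1\le i<k$. For a vertex $v$, $e^-(v)$ denotes the edge incident to $v$ with the smallest label. The minimum-edge digraph $G^-=(V,E^-)$ has an arc $(u,v)$ whenever $\{u,v\}=e^-(v)$, except that if two vertices $u,v$ satisfy $e^-(u)=e^-(v)=\{u,v\}$, only one of the two arcs $(u,v),(v,u)$ is included (chosen arbitrarily). *)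

theory Defs
  imports Main
begin

definition clique_edges :: "'a set \<Rightarrow> 'a set set" where
  "clique_edges V = {{u, v} | u v. u \<in> V \<and> v \<in> V \<and> u \<noteq> v}"

definition simple_temporal_clique :: "'a set \<Rightarrow> ('a set \<Rightarrow> nat) \<Rightarrow> bool" where
  "simple_temporal_clique V lam \<longleftrightarrow> finite V \<and>
     (\<forall>e1\<in>clique_edges V. \<forall>e2\<in>clique_edges V. e1 \<noteq> e2 \<and> e1 \<inter> e2 \<noteq> {} \<longrightarrow> lam e1 \<noteq> lam e2)"

definition min_edge :: "'a set \<Rightarrow> ('a set \<Rightarrow> nat) \<Rightarrow> 'a \<Rightarrow> 'a set" where
  "min_edge V lam v = (ARG_MIN lam e. e \<in> clique_edges V \<and> v \<in> e)"

text \<open>A is a minimum-edge digraph: arc (u,v) iff {u,v} = e^-(v), except that for a pair with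
  e^-(u) = e^-(v) = {u,v} exactly one of the two arcs (arbitrary) is present.\<close>
definition min_edge_digraph :: "'a set \<Rightarrow> ('a set \<Rightarrow> nat) \<Rightarrow> ('a \<times> 'a) set \<Rightarrow> bool" where
  "min_edge_digraph V lam A \<longleftrightarrow>
     A \<subseteq> {(u, v). u \<in> V \<and> v \<in> V \<and> u \<noteq> v \<and> {u, v} = min_edge V lam v} \<and>
     (\<forall>u\<in>V. \<forall>v\<in>V. u \<noteq> v \<and> {u, v} = min_edge V lam v \<longrightarrow> (u, v) \<in> A \<or> (v, u) \<in> A) \<and>
     (\<forall>u v. (u, v) \<in> A \<longrightarrow> (v, u) \<notin> A)"

definition directed_path :: "('a \<times> 'a) set \<Rightarrow> 'a list \<Rightarrow> bool" where
  "directed_path A xs \<longleftrightarrow> length xs \<ge> 2 \<and> distinct xs \<and>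
     (\<forall>i. i + 1 < length xs \<longrightarrow> (xs ! i, xs ! (i + 1)) \<in> A)"

definition journey :: "'a set \<Rightarrow> ('a set \<Rightarrow> nat) \<Rightarrow> 'a list \<Rightarrow> bool" where
  "journey V lam xs \<longleftrightarrow> length xs \<ge> 2 \<and> set xs \<subseteq> V \<and>
     (\<forall>i. i + 1 < length xs \<longrightarrow> xs ! i \<noteq> xs ! (i + 1)) \<and>
     (\<forall>i. i + 2 < length xs \<longrightarrow>
        lam {xs ! i, xs ! (i + 1)} < lam {xs ! (i + 1), xs ! (i + 2)})"

end

theory Submission
  imports Defs
begin

theorem lemma2:
  fixes V :: "'a set" and lam :: "'a set \<Rightarrow> nat" and A :: "('a \<times> 'a) set" and xs :: "'a list"
  assumes "simple_temporal_clique V lam"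
    and "min_edge_digraph V lam A"
    and "directed_path A xs"
  shows "journey V lam xs"
proof -
  have len: "length xs \<ge> 2" and dist: "distinct xs"
    and arc: "\<And>i. i + 1 < length xs \<Longrightarrow> (xs ! i, xs ! (i + 1)) \<in> A"
    using assms(3) unfolding directed_path_def by auto
  have sub: "A \<subseteq> {(u, v). u \<in> V \<and> v \<in> V \<and> u \<noteq> v \<and> {u, v} = min_edge V lam v}"
    using assms(2) unfolding min_edge_digraph_def by auto
  have sc: "\<And>e1 e2. e1\<in>clique_edges V \<Longrightarrow> e2\<in>clique_edges V \<Longrightarrow> e1 \<noteq> e2 \<Longrightarrow> e1 \<inter> e2 \<noteq> {} \<Longrightarrow> lam e1 \<noteq> lam e2"
    using assms(1) unfolding simple_temporal_clique_def by blast
  have arcP: "\<And>i. i + 1 < length xs \<Longrightarrow> xs ! i \<in> V \<and> xs ! (i+1) \<in> V \<and> xs ! i \<noteq> xs ! (i+1)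
      \<and> {xs ! i, xs ! (i+1)} = min_edge V lam (xs ! (i+1))"
    using arc sub by blast
  have setV: "set xs \<subseteq> V"
  proof
    fix x assume "x \<in> set xs"
    then obtain j where j: "j < length xs" "x = xs ! j" by (auto simp: in_set_conv_nth)
    show "x \<in> V"
    proof (cases "j = 0")
      case True
      then show ?thesis using arcP[of 0] len j by auto
    next
      case False
      then obtain i where "j = i + 1" by (cases j) auto
      then show ?thesis using arcP[of i] j by auto
    qed
  qed
  have inc: "lam {xs ! i, xs ! (i + 1)} < lam {xs ! (i + 1), xs ! (i + 2)}" if i: "i + 2 < length xs" for i
  proof -
    let ?a = "xs ! i" and ?b = "xs ! (i+1)" and ?c = "xs ! (i+2)"
    have 1: "?a \<in> V \<and> ?b \<in> V \<and> ?a \<noteq> ?b \<and> {?a, ?b} = min_edge V lam ?b" using arcP[of i] i by auto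
    have 2: "?b \<in> V \<and> ?c \<in> V \<and> ?b \<noteq> ?c" using arcP[of "i+1"] i by (auto simp: add.assoc)
    have ac: "?a \<noteq> ?c" using dist i by (simp add: nth_eq_iff_index_eq)
    have e2: "{?b, ?c} \<in> clique_edges V" using 2 unfolding clique_edges_def by blast
    have e1: "{?a, ?b} \<in> clique_edges V" using 1 unfolding clique_edges_def by blast
    have "lam (min_edge V lam ?b) \<le> lam {?b, ?c}"
      unfolding min_edge_def by (rule arg_min_nat_le) (use e2 in auto)
    hence le: "lam {?a, ?b} \<le> lam {?b, ?c}" using 1 by simp
    have "{?a, ?b} \<noteq> {?b, ?c}" using ac 1 2 by (auto simp: doubleton_eq_iff)
    hence "lam {?a, ?b} \<noteq> lam {?b, ?c}" using sc[OF e1 e2] by auto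
    with le show ?thesis by simp
  qed
  show ?thesis unfolding journey_def using len setV arcP inc by auto
qed

end
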